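(* Let $G$ be a primitive strongly regular graph with parameters $(v,k,\lambda,\mu)$. Then $|\lambda-\mu|<v^{3/4}$.
   Context: A graph is strongly regular with parameters $(v,k,\lambda,\mu)$ if it is a $k$-regular graph on $v$ vertices such that each edge lies in exactly $\lambda$ triangles and any two distinct non-adjacent vertices have exactly $\mu$ common neighbours; complete and edgeless graphs are excluded. A strongly regular graph is primitive if both it and its complement are connected. *)

theory Defs
  imports Complex_Main
begin

definition simple_graph :: "'a set \<Rightarrow> ('a \<Rightarrow> 'a \<Rightarrow> bool) \<Rightarrow> bool" where
  "simple_graph V E \<longleftrightarrow> finite V \<and> (\<forall>x y. E x y \<longrightarrow> x \<in> V \<and> y \<in> V)
     \<and> (\<forall>x y. E x y \<longrightarrow> E y x) \<and> (\<forall>x. \<not> E x x)"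

definition neighbours :: "'a set \<Rightarrow> ('a \<Rightarrow> 'a \<Rightarrow> bool) \<Rightarrow> 'a \<Rightarrow> 'a set" where
  "neighbours V E x = {y \<in> V. E x y}"

definition complement_graph :: "'a set \<Rightarrow> ('a \<Rightarrow> 'a \<Rightarrow> bool) \<Rightarrow> ('a \<Rightarrow> 'a \<Rightarrow> bool)" where
  "complement_graph V E = (\<lambda>x y. x \<in> V \<and> y \<in> V \<and> x \<noteq> y \<and> \<not> E x y)"

text \<open>Connectedness: every two vertices are joined by a walk (reflexive transitive
  closure of adjacency). The empty graph is not considered (V is nonempty below).\<close>
definition connected_graph :: "'a set \<Rightarrow> ('a \<Rightarrow> 'a \<Rightarrow> bool) \<Rightarrow> bool" where
  "connected_graph V E \<longleftrightarrow> (\<forall>x\<in>V. \<forall>y\<in>V. (E\<^sup>*\<^sup>*) x y)"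

definition srg :: "'a set \<Rightarrow> ('a \<Rightarrow> 'a \<Rightarrow> bool) \<Rightarrow> nat \<Rightarrow> nat \<Rightarrow> nat \<Rightarrow> nat \<Rightarrow> bool" where
  "srg V E v k l m \<longleftrightarrow> simple_graph V E \<and> card V = v
     \<and> (\<forall>x\<in>V. card (neighbours V E x) = k)
     \<and> (\<forall>x\<in>V. \<forall>y\<in>V. E x y \<longrightarrow> card (neighbours V E x \<inter> neighbours V E y) = l)
     \<and> (\<forall>x\<in>V. \<forall>y\<in>V. x \<noteq> y \<longrightarrow> \<not> E x y \<longrightarrow> card (neighbours V E x \<inter> neighbours V E y) = m)
     \<and> (\<exists>x y. E x y)
     \<and> (\<exists>x\<in>V. \<exists>y\<in>V. x \<noteq> y \<and> \<not> E x y)"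

definition primitive_srg :: "'a set \<Rightarrow> ('a \<Rightarrow> 'a \<Rightarrow> bool) \<Rightarrow> nat \<Rightarrow> nat \<Rightarrow> nat \<Rightarrow> nat \<Rightarrow> bool" where
  "primitive_srg V E v k l m \<longleftrightarrow> srg V E v k l m \<and> connected_graph V E
     \<and> connected_graph V (complement_graph V E)"

end

theory Submission
  imports Defs "HOL-Library.Function_Algebras"
begin



definition ip :: "'a set \<Rightarrow> ('a \<Rightarrow> real) \<Rightarrow> ('a \<Rightarrow> real) \<Rightarrow> real" where
  "ip V f g = (\<Sum>x\<in>V. f x * g x)"

lemma ip_comm: "ip V f g = ip V g f" unfolding ip_def by (simp add: mult.commute)

lemma ip_sum_left: "ip V (\<lambda>x. \<Sum>q\<in>B. c q * h q x) g = (\<Sum>q\<in>B. c q * ip V (h q) g)"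
  unfolding ip_def by (simp add: sum_distrib_right sum_distrib_left mult.assoc) (rule sum.swap)

lemma ip_cong: "(\<And>x. x \<in> V \<Longrightarrow> f x = f' x) \<Longrightarrow> ip V f g = ip V f' g"
  unfolding ip_def by simp

lemma ip_diff_left: "ip V (\<lambda>x. f x - h x) g = ip V f g - ip V h g"
  unfolding ip_def by (simp add: algebra_simps sum_subtractf)

lemma ip_add_left: "ip V (\<lambda>x. f x + h x) g = ip V f g + ip V h g"
  unfolding ip_def by (simp add: algebra_simps sum.distrib)

lemma ip_scale_left: "ip V (\<lambda>x. a * f x) g = a * ip V f g"
  unfolding ip_def by (simp add: sum_distrib_left mult.assoc)

lemma ip_self_nonneg: "ip V f f \<ge> 0" unfolding ip_def by (simp add: sum_nonneg)

lemma ip_self_zero: "finite V \<Longrightarrow> ip V f f = 0 \<Longrightarrow> x \<in> V \<Longrightarrow> f x = 0"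
  unfolding ip_def by (simp add: sum_nonneg_eq_0_iff)

lemma orth_sum: assumes "finite B" "q \<in> B" "\<forall>q'\<in>B. q' \<noteq> q \<longrightarrow> ip V q' q = 0"
  shows "(\<Sum>q'\<in>B. c q' * ip V q' q) = c q * ip V q q"
proof -
  have "(\<Sum>q'\<in>B. c q' * ip V q' q) = c q * ip V q q + (\<Sum>q'\<in>B - {q}. c q' * ip V q' q)"
    using assms by (simp add: sum.remove)
  also have "(\<Sum>q'\<in>B - {q}. c q' * ip V q' q) = 0" using assms(3) by (intro sum.neutral) auto
  finally show ?thesis by simp
qed

lemma gs:
  fixes V :: "'a set" and U :: "('a \<Rightarrow> real) set" and Q :: "('a\<Rightarrow>real) \<Rightarrow> bool"
  assumes fV: "finite V" and fU: "finite U"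
   and Qsum: "\<And>u (B::('a\<Rightarrow>real) set) c. finite B \<Longrightarrow> Q u \<Longrightarrow> (\<forall>q\<in>B. Q q) \<Longrightarrow> Q (\<lambda>x. u x - (\<Sum>q\<in>B. c q * q x))"
   and Qsc: "\<And>u a. Q u \<Longrightarrow> Q (\<lambda>x. a * u x)"
  shows "(\<forall>u\<in>U. Q u) \<Longrightarrow> \<exists>B. finite B \<and> (\<forall>q\<in>B. Q q) \<and> (\<forall>q\<in>B. ip V q q = 1) \<and> (\<forall>q\<in>B. \<forall>q'\<in>B. q \<noteq> q' \<longrightarrow> ip V q q' = 0)
        \<and> (\<forall>u\<in>U. \<forall>x\<in>V. u x = (\<Sum>q\<in>B. ip V u q * q x))"
  using fU
proof (induction U rule: finite_induct)
  case empty
  show ?case by (rule exI[of _ "{}"]) auto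
next
  case (insert u U)
  then obtain B where fB: "finite B" and QB: "\<forall>q\<in>B. Q q" and n1: "\<forall>q\<in>B. ip V q q = 1"
    and orth: "\<forall>q\<in>B. \<forall>q'\<in>B. q \<noteq> q' \<longrightarrow> ip V q q' = 0"
    and exp: "\<forall>u\<in>U. \<forall>x\<in>V. u x = (\<Sum>q\<in>B. ip V u q * q x)" by auto
  have Qu: "Q u" using insert by auto
  define w where "w = (\<lambda>x. u x - (\<Sum>q\<in>B. ip V u q * q x))"
  have Qw: "Q w" unfolding w_def using Qsum fB Qu QB by blast
  have wo: "ip V w q = 0" if "q \<in> B" for q
  proof -
    have "ip V w q = ip V u q - (\<Sum>q'\<in>B. ip V u q' * ip V q' q)"
      unfolding w_def ip_diff_left ip_sum_left ..
    also have "(\<Sum>q'\<in>B. ip V u q' * ip V q' q) = ip V u q * ip V q q"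
      by (rule orth_sum) (use fB that orth in auto)
    finally show ?thesis using n1 that by simp
  qed
  have oldexp: "\<forall>x\<in>V. u x = w x + (\<Sum>q\<in>B. ip V u q * q x)" unfolding w_def by simp
  show ?case
  proof (cases "ip V w w = 0")
    case True
    then have "\<forall>x\<in>V. w x = 0" using ip_self_zero[OF fV] by blast
    then show ?thesis using fB QB n1 orth exp oldexp by (intro exI[of _ B]) auto
  next
    case False
    then have wpos: "ip V w w > 0" using ip_self_nonneg[of V w] by linarith
    define n where "n = sqrt (ip V w w)"
    have npos: "n > 0" unfolding n_def using wpos by simp
    have nn: "n * n = ip V w w" unfolding n_def using wpos by simp
    define q' where "q' = (\<lambda>x. (1/n) * w x)"
    have Qo': "Q q'" unfolding q'_def using Qw Qsc by blast
    have q'q': "ip V q' q' = 1"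
    proof -
      have "ip V q' q' = (1/n) * ip V w q'" unfolding q'_def[of] ip_scale_left by (simp add: q'_def)
      also have "ip V w q' = ip V q' w" by (rule ip_comm)
      also have "\<dots> = (1/n) * ip V w w" unfolding q'_def ip_scale_left ..
      finally show ?thesis using nn npos wpos by (simp add: field_simps)
    qed
    have q'q: "ip V q' q = 0" if "q \<in> B" for q
      unfolding q'_def ip_scale_left using wo[OF that] by simp
    have oo': "ip V q q' = 0" if "q \<in> B" for q using q'q[OF that] ip_comm by metis
    have notin: "q' \<notin> B" using q'q q'q' by force
    have uo': "ip V u q' = n"
    proof -
      have "ip V u q' = ip V (\<lambda>x. w x + (\<Sum>q\<in>B. ip V u q * q x)) q'"
        using oldexp by (intro ip_cong) auto
      also have "\<dots> = ip V w q' + (\<Sum>q\<in>B. ip V u q * ip V q q')"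
        unfolding ip_add_left ip_sum_left ..
      also have "(\<Sum>q\<in>B. ip V u q * ip V q q') = 0" using oo' by simp
      also have "ip V w q' = n"
      proof -
        have "ip V w q' = ip V q' w" by (rule ip_comm)
        also have "\<dots> = (1/n) * ip V w w" unfolding q'_def ip_scale_left ..
        finally have "n * ip V w q' = n * n" using nn npos by (simp add: field_simps)
        then show ?thesis using npos by simp
      qed
      finally show ?thesis by simp
    qed
    have u2o': "ip V u2 q' = 0" if "u2 \<in> U" for u2
    proof -
      have "ip V u2 q' = ip V (\<lambda>x. \<Sum>q\<in>B. ip V u2 q * q x) q'"
        using exp that by (intro ip_cong) auto
      also have "\<dots> = 0" unfolding ip_sum_left using oo' by simp
      finally show ?thesis .
    qed
    show ?thesis
    proof (rule exI[of _ "insert q' B"], intro conjI)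
      show "finite (insert q' B)" using fB by simp
      show "\<forall>q\<in>insert q' B. Q q" using QB Qo' by auto
      show "\<forall>q\<in>insert q' B. ip V q q = 1" using n1 q'q' by auto
      show "\<forall>q\<in>insert q' B. \<forall>q2\<in>insert q' B. q \<noteq> q2 \<longrightarrow> ip V q q2 = 0"
        using orth q'q oo' by auto
      show "\<forall>u2\<in>insert u U. \<forall>x\<in>V. u2 x = (\<Sum>q\<in>insert q' B. ip V u2 q * q x)"
      proof (intro ballI)
        fix u2 x assume u2: "u2 \<in> insert u U" and x: "x \<in> V"
        have s: "(\<Sum>q\<in>insert q' B. ip V u2 q * q x) = ip V u2 q' * q' x + (\<Sum>q\<in>B. ip V u2 q * q x)"
          using fB notin by simp
        show "u2 x = (\<Sum>q\<in>insert q' B. ip V u2 q * q x)"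
        proof (cases "u2 = u")
          case True
          have "n * q' x = w x" unfolding q'_def using npos by simp
          then show ?thesis using s uo' oldexp x True by simp
        next
          case False
          then have "u2 \<in> U" using u2 by simp
          then show ?thesis unfolding s using u2o' exp x by simp
        qed
      qed
    qed
  qed
qed



lemma sum_fun_apply: "(sum f A) x = sum (\<lambda>i. f i x) A"
  by (induction A rule: infinite_finite_induct) auto

interpretation fvs: vector_space "(\<lambda>c F z. c * F z) :: real \<Rightarrow> ('b \<Rightarrow> real) \<Rightarrow> ('b \<Rightarrow> real)"
  by unfold_locales (auto simp: fun_eq_iff algebra_simps)

lemma indep_bound:
  fixes V :: "'a set" and u :: "'a \<Rightarrow> 'a \<Rightarrow> real" and B :: "('a\<Rightarrow>real) set" and \<beta> \<gamma> :: real
  assumes fV: "finite V" and fB: "finite B"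
   and exp: "\<forall>x\<in>V. \<forall>z\<in>V. u x z = (\<Sum>q\<in>B. ip V (u x) q * q z)"
   and off: "\<forall>x\<in>V. \<forall>y\<in>V. x \<noteq> y \<longrightarrow> (ip V (u x) (u y) - \<beta>) * (ip V (u x) (u y) - \<gamma>) = 0"
   and diag: "\<forall>x\<in>V. (ip V (u x) (u x) - \<beta>) * (ip V (u x) (u x) - \<gamma>) \<noteq> 0"
  shows "card V \<le> card B * card B + card B + 1"
proof -
  define F where "F x = (\<lambda>z. (ip V (u x) z - \<beta>) * (ip V (u x) z - \<gamma>))" for x
  define g where "g = (\<lambda>(p,q). (\<lambda>z. ip V p z * ip V q z))"
  define h where "h = (\<lambda>q. (\<lambda>z. ip V q z))"
  define S where "S = g ` (B \<times> B) \<union> h ` B \<union> {(\<lambda>z. 1)}"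
  have fS: "finite S" unfolding S_def using fB by simp
  have cS: "card S \<le> card B * card B + card B + 1"
  proof -
    have "card S \<le> card (g ` (B \<times> B) \<union> h ` B) + card {(\<lambda>z::'a\<Rightarrow>real. 1::real)}"
      unfolding S_def by (rule card_Un_le)
    also have "card (g ` (B \<times> B) \<union> h ` B) \<le> card (g ` (B \<times> B)) + card (h ` B)" by (rule card_Un_le)
    also have "card (g ` (B \<times> B)) \<le> card (B \<times> B)" by (rule card_image_le) (use fB in simp)
    also have "card (h ` B) \<le> card B" by (rule card_image_le) (use fB in simp)
    finally show ?thesis by (simp add: card_cartesian_product)
  qed
  have Fspan: "F x \<in> fvs.span S" if x: "x \<in> V" for x
  proof -
    define c where "c q = ip V (u x) q" for q
    have L: "ip V (u x) z = (\<Sum>q\<in>B. c q * ip V q z)" for z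
    proof -
      have "ip V (u x) z = ip V (\<lambda>w. \<Sum>q\<in>B. c q * q w) z"
        using exp x unfolding c_def by (intro ip_cong) auto
      also have "\<dots> = (\<Sum>q\<in>B. c q * ip V q z)" by (rule ip_sum_left)
      finally show ?thesis .
    qed
    have eq: "F x = (\<Sum>pq\<in>B \<times> B. (\<lambda>z. (c (fst pq) * c (snd pq)) * g pq z))
        + (\<Sum>q\<in>B. (\<lambda>z. (-(\<beta>+\<gamma>) * c q) * h q z)) + (\<lambda>z. (\<beta>*\<gamma>) * 1)"
    proof (rule ext)
      fix z
      have sq: "(\<Sum>q\<in>B. c q * ip V q z) * (\<Sum>q\<in>B. c q * ip V q z)
          = (\<Sum>pq\<in>B \<times> B. (c (fst pq) * c (snd pq)) * (ip V (fst pq) z * ip V (snd pq) z))"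
        by (simp add: sum_product sum.cartesian_product algebra_simps case_prod_beta)
      show "F x z = ((\<Sum>pq\<in>B \<times> B. (\<lambda>z. (c (fst pq) * c (snd pq)) * g pq z))
        + (\<Sum>q\<in>B. (\<lambda>z. (-(\<beta>+\<gamma>) * c q) * h q z)) + (\<lambda>z. (\<beta>*\<gamma>) * 1)) z"
      proof -
        let ?L = "(\<Sum>q\<in>B. c q * ip V q z)"
        have 1: "((\<Sum>pq\<in>B \<times> B. (\<lambda>z. (c (fst pq) * c (snd pq)) * g pq z))
          + (\<Sum>q\<in>B. (\<lambda>z. (-(\<beta>+\<gamma>) * c q) * h q z)) + (\<lambda>z. (\<beta>*\<gamma>) * 1)) z
          = (\<Sum>pq\<in>B \<times> B. (c (fst pq) * c (snd pq)) * g pq z) + (\<Sum>q\<in>B. (-(\<beta>+\<gamma>) * c q) * h q z) + \<beta>*\<gamma>"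
          by (simp add: plus_fun_def sum_fun_apply)
        have 2: "(\<Sum>pq\<in>B \<times> B. (c (fst pq) * c (snd pq)) * g pq z) = ?L * ?L"
          using sq by (simp add: g_def case_prod_beta mult.assoc)
        have 3: "(\<Sum>q\<in>B. (-(\<beta>+\<gamma>) * c q) * h q z) = -(\<beta>+\<gamma>) * ?L"
          by (simp add: h_def sum_distrib_left mult.assoc)
        have 4: "F x z = (?L - \<beta>) * (?L - \<gamma>)" unfolding F_def L ..
        show ?thesis unfolding 1 2 3 4 by (simp add: algebra_simps)
      qed
    qed
    show ?thesis unfolding eq
    proof (intro fvs.span_add fvs.span_sum)
      fix pq assume "pq \<in> B \<times> B"
      then have "g pq \<in> fvs.span S" unfolding S_def by (intro fvs.span_base) auto
      then show "(\<lambda>z. (c (fst pq) * c (snd pq)) * g pq z) \<in> fvs.span S" by (rule fvs.span_scale)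
    next
      fix q assume "q \<in> B"
      then have "h q \<in> fvs.span S" unfolding S_def by (intro fvs.span_base) auto
      then show "(\<lambda>z. (-(\<beta>+\<gamma>) * c q) * h q z) \<in> fvs.span S" by (rule fvs.span_scale)
    next
      have "(\<lambda>z. 1) \<in> fvs.span S" unfolding S_def by (intro fvs.span_base) auto
      then show "(\<lambda>z. (\<beta>*\<gamma>) * 1) \<in> fvs.span S" by (rule fvs.span_scale)
    qed
  qed
  have Fval: "F x (u y) = (if x = y then (ip V (u x) (u x) - \<beta>) * (ip V (u x) (u x) - \<gamma>) else 0)"
    if "x \<in> V" "y \<in> V" for x y
    using off that unfolding F_def by auto
  have inj: "inj_on F V"
  proof (rule inj_onI)
    fix x y assume xy: "x \<in> V" "y \<in> V" "F x = F y"
    show "x = y"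
    proof (rule ccontr)
      assume "x \<noteq> y"
      have "F x (u x) = F y (u x)" using xy by simp
      then show False using Fval[of x x] Fval[of y x] xy \<open>x \<noteq> y\<close> diag by auto
    qed
  qed
  have ind0: "f G = 0" if sum0: "(\<Sum>G\<in>F ` V. (\<lambda>z. f G * G z)) = 0" and G: "G \<in> F ` V" for f G
  proof -
    obtain y where y: "y \<in> V" "G = F y" using G by auto
    have "0 = (\<Sum>G\<in>F ` V. (\<lambda>z. f G * G z)) (u y)" using sum0 by simp
    also have "\<dots> = (\<Sum>G\<in>F ` V. f G * G (u y))" by (rule sum_fun_apply)
    also have "\<dots> = (\<Sum>x\<in>V. f (F x) * F x (u y))" by (rule sum.reindex[OF inj, unfolded comp_def])
    also have "\<dots> = (\<Sum>x\<in>V. if x = y then f (F y) * ((ip V (u y) (u y) - \<beta>) * (ip V (u y) (u y) - \<gamma>)) else 0)"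
      using Fval y by (intro sum.cong) auto
    also have "\<dots> = f (F y) * ((ip V (u y) (u y) - \<beta>) * (ip V (u y) (u y) - \<gamma>))"
      using fV y by simp
    finally have z: "f (F y) * ((ip V (u y) (u y) - \<beta>) * (ip V (u y) (u y) - \<gamma>)) = 0" by (rule sym)
    have d: "(ip V (u y) (u y) - \<beta>) * (ip V (u y) (u y) - \<gamma>) \<noteq> 0" by (rule bspec[OF diag y(1)])
    from z d have "f (F y) = 0" by simp
    then show ?thesis using y(2) by (simp only:)
  qed
  have ind: "fvs.independent (F ` V)"
    by (rule fvs.independent_if_scalars_zero) (use fV ind0 in auto)
  have "card (F ` V) \<le> card S"
    using fvs.independent_span_bound[OF fS ind] Fspan by auto
  then show ?thesis using card_image[OF inj] cS by simp
qed




locale srgl =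
  fixes V :: "'a set" and E :: "'a \<Rightarrow> 'a \<Rightarrow> bool" and v k l mu :: nat
  assumes srg: "srg V E v k l mu"
begin

lemma fin: "finite V" using srg unfolding srg_def simple_graph_def by auto
lemma sym: "E x y \<Longrightarrow> E y x" using srg unfolding srg_def simple_graph_def by auto
lemma irr: "\<not> E x x" using srg unfolding srg_def simple_graph_def by auto
lemma inV: "E x y \<Longrightarrow> x \<in> V \<and> y \<in> V" using srg unfolding srg_def simple_graph_def by auto
lemma cardV: "card V = v" using srg unfolding srg_def by auto
lemma degk: "x \<in> V \<Longrightarrow> card (neighbours V E x) = k" using srg unfolding srg_def by auto
lemma lam: "x \<in> V \<Longrightarrow> y \<in> V \<Longrightarrow> E x y \<Longrightarrow> card (neighbours V E x \<inter> neighbours V E y) = l"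
  using srg unfolding srg_def by auto
lemma muu: "x \<in> V \<Longrightarrow> y \<in> V \<Longrightarrow> x \<noteq> y \<Longrightarrow> \<not> E x y \<Longrightarrow> card (neighbours V E x \<inter> neighbours V E y) = mu"
  using srg unfolding srg_def by auto

definition Av :: "'a \<Rightarrow> 'a \<Rightarrow> real" where "Av x y = (if E x y then 1 else 0)"
definition Dl :: "'a \<Rightarrow> 'a \<Rightarrow> real" where "Dl x y = (if x = y then 1 else 0)"

lemma Av_sym: "Av x y = Av y x" unfolding Av_def using sym by auto

lemma sum_row: assumes "x \<in> V" shows "(\<Sum>z\<in>V. Av x z) = k"
proof -
  have "(\<Sum>z\<in>V. Av x z) = (\<Sum>z\<in>V. if z \<in> neighbours V E x then 1 else 0)"
    unfolding Av_def neighbours_def by (intro sum.cong) auto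
  also have "\<dots> = real (card (neighbours V E x))"
    using fin by (simp add: sum.If_cases neighbours_def Int_def)
  finally show ?thesis using degk[OF assms] by simp
qed

lemma sum_col: assumes "y \<in> V" shows "(\<Sum>z\<in>V. Av z y) = k"
  using sum_row[OF assms] by (simp add: Av_sym)

lemma delta_l: "finite V \<Longrightarrow> x \<in> V \<Longrightarrow> (\<Sum>z\<in>V. (if x = z then 1 else 0) * g z) = (g x::real)"
proof -
  assume "finite V" "x \<in> V"
  have "(\<Sum>z\<in>V. (if x = z then 1 else 0) * g z) = (\<Sum>z\<in>V. if x = z then g z else 0)"
    by (intro sum.cong) auto
  thus ?thesis using \<open>finite V\<close> \<open>x \<in> V\<close> by simp
qed
lemma delta_r: "finite V \<Longrightarrow> x \<in> V \<Longrightarrow> (\<Sum>z\<in>V. g z * (if z = x then 1 else 0)) = (g x::real)"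
proof -
  assume "finite V" "x \<in> V"
  have "(\<Sum>z\<in>V. g z * (if z = x then 1 else 0)) = (\<Sum>z\<in>V. if x = z then g z else 0)"
    by (intro sum.cong) auto
  thus ?thesis using \<open>finite V\<close> \<open>x \<in> V\<close> by simp
qed

lemma sum_AD: "y \<in> V \<Longrightarrow> (\<Sum>z\<in>V. Av x z * Dl z y) = Av x y"
  unfolding Dl_def using fin delta_r[of y "\<lambda>z. Av x z"] by simp
lemma sum_DA: "x \<in> V \<Longrightarrow> (\<Sum>z\<in>V. Dl x z * Av z y) = Av x y"
  unfolding Dl_def using fin delta_l[of x "\<lambda>z. Av z y"] by simp
lemma sum_DD: "x \<in> V \<Longrightarrow> (\<Sum>z\<in>V. Dl x z * Dl z y) = Dl x y"
  unfolding Dl_def using fin delta_l[of x "\<lambda>z. if z = y then 1 else (0::real)"] by simp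
lemma sum_D1: "x \<in> V \<Longrightarrow> (\<Sum>z\<in>V. Dl x z) = 1"
  unfolding Dl_def using fin by simp
lemma sum_D2: "y \<in> V \<Longrightarrow> (\<Sum>z\<in>V. Dl z y) = 1"
  unfolding Dl_def using fin by (simp add: eq_commute[of _ y])

lemma A2: assumes "x \<in> V" "y \<in> V"
  shows "(\<Sum>z\<in>V. Av x z * Av z y) = mu + (real k - mu) * Dl x y + (real l - mu) * Av x y"
proof -
  have "(\<Sum>z\<in>V. Av x z * Av z y) = (\<Sum>z\<in>V. if z \<in> neighbours V E x \<inter> neighbours V E y then 1 else 0)"
    unfolding Av_def neighbours_def by (intro sum.cong) (auto dest: sym)
  also have "\<dots> = real (card (neighbours V E x \<inter> neighbours V E y))"
    using fin by (simp add: sum.If_cases neighbours_def Int_def) (rule arg_cong[where f=card], auto)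
  finally have e: "(\<Sum>z\<in>V. Av x z * Av z y) = real (card (neighbours V E x \<inter> neighbours V E y))" .
  show ?thesis
  proof (cases "x = y")
    case True then show ?thesis using e degk[OF assms(1)] by (simp add: Dl_def Av_def irr)
  next
    case False
    show ?thesis
    proof (cases "E x y")
      case True then show ?thesis using e lam[OF assms] False by (simp add: Dl_def Av_def)
    next
      case ne: False then show ?thesis using e muu[OF assms False] False by (simp add: Dl_def Av_def)
    qed
  qed
qed

lemma V_ne: "V \<noteq> {}" using srg unfolding srg_def by auto

lemma kk: "real k * k = real mu * real v + real k - real mu + (real l - real mu) * real k"
proof -
  obtain x where x: "x \<in> V" using V_ne by auto
  have "(\<Sum>y\<in>V. \<Sum>z\<in>V. Av x z * Av z y) = (\<Sum>z\<in>V. Av x z * (\<Sum>y\<in>V. Av z y))"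
    by (subst sum.swap) (simp add: sum_distrib_left)
  also have "\<dots> = (\<Sum>z\<in>V. Av x z * k)"
    by (intro sum.cong refl) (auto simp: sum_row dest: inV)
  also have "\<dots> = real k * k" using sum_row[OF x] by (simp add: sum_distrib_right[symmetric])
  finally have 1: "(\<Sum>y\<in>V. \<Sum>z\<in>V. Av x z * Av z y) = real k * k" .
  have "(\<Sum>y\<in>V. \<Sum>z\<in>V. Av x z * Av z y) = (\<Sum>y\<in>V. mu + (real k - mu) * Dl x y + (real l - mu) * Av x y)"
    using A2 x by (intro sum.cong) auto
  also have "\<dots> = mu * v + (real k - mu) * 1 + (real l - mu) * k"
    using sum_row[OF x] sum_D1[OF x] cardV
    by (simp add: sum.distrib sum_distrib_left[symmetric])
  finally show ?thesis using 1 by simp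
qed

lemma Pm_sq: fixes a b c :: real assumes "x \<in> V" "y \<in> V"
  shows "(\<Sum>z\<in>V. (a * Av x z + b * Dl x z + c) * (a * Av z y + b * Dl z y + c))
     = a*a*(mu + (real k - mu) * Dl x y + (real l - mu) * Av x y) + 2*a*b*Av x y + 2*a*c*k + b*b*Dl x y + 2*b*c + c*c*v"
proof -
  have "(\<Sum>z\<in>V. (a * Av x z + b * Dl x z + c) * (a * Av z y + b * Dl z y + c))
    = (\<Sum>z\<in>V. a*a*(Av x z * Av z y) + a*b*(Av x z * Dl z y) + a*c*Av x z + b*a*(Dl x z * Av z y)
        + b*b*(Dl x z * Dl z y) + b*c*Dl x z + c*a*Av z y + c*b*Dl z y + c*c)"
    by (intro sum.cong refl) (simp add: algebra_simps)
  also have "\<dots> = a*a*(\<Sum>z\<in>V. Av x z * Av z y) + a*b*(\<Sum>z\<in>V. Av x z * Dl z y) + a*c*(\<Sum>z\<in>V. Av x z)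
      + b*a*(\<Sum>z\<in>V. Dl x z * Av z y) + b*b*(\<Sum>z\<in>V. Dl x z * Dl z y) + b*c*(\<Sum>z\<in>V. Dl x z)
      + c*a*(\<Sum>z\<in>V. Av z y) + c*b*(\<Sum>z\<in>V. Dl z y) + c*c*card V"
    by (simp add: sum.distrib sum_distrib_left)
  also have "\<dots> = a*a*(mu + (real k - mu) * Dl x y + (real l - mu) * Av x y) + 2*a*b*Av x y + 2*a*c*k + b*b*Dl x y + 2*b*c + c*c*v"
    by (simp only: assms A2 sum_AD sum_DA sum_DD sum_D1 sum_D2 sum_row sum_col cardV) (simp add: algebra_simps)
  finally show ?thesis .
qed

end

locale srgc = srgl +
  fixes \<rho> \<sigma> :: real
  assumes rs_sum: "\<rho> + \<sigma> = real l - real mu"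
    and rs_prod: "\<rho> * \<sigma> = real mu - real k"
    and rs_ne: "\<rho> \<noteq> \<sigma>"
begin

definition "th = \<rho> - \<sigma>"
definition "c0 = (real k - \<sigma>) / real v"
definition "P x y = (Av x y - \<sigma> * Dl x y - c0) / th"

lemma th_nz: "th \<noteq> 0" using rs_ne unfolding th_def by simp

lemma v_pos: "real v > 0" using cardV V_ne fin by (metis card_gt_0_iff of_nat_0_less_iff)

lemma P_sym: "P x y = P y x" unfolding P_def by (simp add: Av_sym Dl_def eq_commute)

lemma P_idem: assumes "x \<in> V" "y \<in> V" shows "(\<Sum>z\<in>V. P x z * P z y) = P x y"
proof -
  have e: "P x y = (1/th) * Av x y + (-\<sigma>/th) * Dl x y + (-c0/th)" for x y
    unfolding P_def by (simp add: field_simps th_nz)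
  have "(\<Sum>z\<in>V. P x z * P z y) = (1/th)*(1/th)*(mu + (real k - mu) * Dl x y + (real l - mu) * Av x y)
      + 2*(1/th)*(-\<sigma>/th)*Av x y + 2*(1/th)*(-c0/th)*k + (-\<sigma>/th)*(-\<sigma>/th)*Dl x y
      + 2*(-\<sigma>/th)*(-c0/th) + (-c0/th)*(-c0/th)*v"
    unfolding e by (rule Pm_sq[OF assms])
  also have "\<dots> = P x y"
  proof -
    have v0: "real v \<noteq> 0" using v_pos by simp
    have kk': "real k * k = real mu * real v + real k - real mu + (real l - real mu) * real k" by (rule kk)
    have l': "real l = \<rho> + \<sigma> + mu" using rs_sum by simp
    have key: "real mu * v = (real k - \<sigma>) * (real k - \<rho>)"
      using kk' rs_prod unfolding l' by algebra
    have cv: "c0 * v = real k - \<sigma>" unfolding c0_def using v0 by simp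
    have muc: "real mu = c0 * (real k - \<rho>)"
    proof -
      have "c0 * (real k - \<rho>) = ((real k - \<sigma>) * (real k - \<rho>)) / real v" unfolding c0_def by simp
      also have "\<dots> = real mu * real v / real v" unfolding key ..
      also have "\<dots> = real mu" using v0 by simp
      finally show ?thesis by simp
    qed
    have br: "mu + (real k - mu) * Dl x y + (real l - mu) * Av x y - 2*\<sigma>*Av x y - 2*c0*k + \<sigma>*\<sigma>*Dl x y
       + 2*\<sigma>*c0 + c0*c0*v = th * (Av x y - \<sigma> * Dl x y - c0)"
      using cv muc l' rs_prod unfolding th_def by algebra
    have "(1/th)*(1/th)*(mu + (real k - mu) * Dl x y + (real l - mu) * Av x y)
      + 2*(1/th)*(-\<sigma>/th)*Av x y + 2*(1/th)*(-c0/th)*k + (-\<sigma>/th)*(-\<sigma>/th)*Dl x y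
      + 2*(-\<sigma>/th)*(-c0/th) + (-c0/th)*(-c0/th)*v
      = (mu + (real k - mu) * Dl x y + (real l - mu) * Av x y - 2*\<sigma>*Av x y - 2*c0*k + \<sigma>*\<sigma>*Dl x y
       + 2*\<sigma>*c0 + c0*c0*v) / (th * th)"
      using th_nz by (simp add: field_simps)
    also have "\<dots> = P x y" unfolding br P_def using th_nz by simp
    finally show ?thesis .
  qed
  finally show ?thesis .
qed


definition "alpha = (- \<sigma> - c0) / th"
definition "bet = (1 - c0) / th"
definition "gam = (- c0) / th"
definition "uu x = (\<lambda>z. if z \<in> V then P x z else 0)"

lemma P_diag: "P x x = alpha" unfolding P_def alpha_def Av_def Dl_def using irr by simp
lemma P_adj: "x \<noteq> y \<Longrightarrow> E x y \<Longrightarrow> P x y = bet" unfolding P_def bet_def Av_def Dl_def by simp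
lemma P_nadj: "x \<noteq> y \<Longrightarrow> \<not> E x y \<Longrightarrow> P x y = gam" unfolding P_def gam_def Av_def Dl_def by simp

lemma ip_uu: assumes "x \<in> V" "y \<in> V" shows "ip V (uu x) (uu y) = P x y"
proof -
  have "ip V (uu x) (uu y) = (\<Sum>z\<in>V. P x z * P z y)"
    unfolding ip_def uu_def by (intro sum.cong) (auto simp: P_sym[of y])
  then show ?thesis using P_idem[OF assms] by simp
qed

lemma alpha_nonneg: "alpha \<ge> 0"
proof -
  obtain x where x: "x \<in> V" using V_ne by auto
  have "alpha = (\<Sum>z\<in>V. P x z * P z x)" using P_idem[OF x x] P_diag by simp
  also have "\<dots> = (\<Sum>z\<in>V. P x z * P x z)" by (simp add: P_sym[of _ x])
  also have "\<dots> \<ge> 0" by (simp add: sum_nonneg)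
  finally show ?thesis .
qed

lemma core_bound:
  assumes s0: "\<sigma> \<noteq> 0" and s1: "\<sigma> \<noteq> -1"
  shows "real v \<le> (v * alpha)^2 + v * alpha + 1"
proof -
  define Q where "Q q = (\<forall>x\<in>V. (\<Sum>z\<in>V. P x z * q z) = q x)" for q :: "'a \<Rightarrow> real"
  have Qsum: "Q (\<lambda>x. u x - (\<Sum>q\<in>B. c q * q x))" if "finite B" "Q u" "\<forall>q\<in>B. Q q" for u B c
    unfolding Q_def
  proof
    fix x assume x: "x \<in> V"
    have "(\<Sum>z\<in>V. P x z * (u z - (\<Sum>q\<in>B. c q * q z)))
       = (\<Sum>z\<in>V. P x z * u z) - (\<Sum>q\<in>B. c q * (\<Sum>z\<in>V. P x z * q z))"
    proof -
      have "(\<Sum>z\<in>V. P x z * (u z - (\<Sum>q\<in>B. c q * q z)))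
          = (\<Sum>z\<in>V. P x z * u z - (\<Sum>q\<in>B. c q * (P x z * q z)))"
        by (intro sum.cong refl) (simp add: right_diff_distrib sum_distrib_left mult.left_commute)
      also have "\<dots> = (\<Sum>z\<in>V. P x z * u z) - (\<Sum>z\<in>V. \<Sum>q\<in>B. c q * (P x z * q z))"
        by (rule sum_subtractf)
      also have "(\<Sum>z\<in>V. \<Sum>q\<in>B. c q * (P x z * q z)) = (\<Sum>q\<in>B. \<Sum>z\<in>V. c q * (P x z * q z))"
        by (rule sum.swap)
      also have "\<dots> = (\<Sum>q\<in>B. c q * (\<Sum>z\<in>V. P x z * q z))"
        by (simp add: sum_distrib_left)
      finally show ?thesis .
    qed
    also have "\<dots> = u x - (\<Sum>q\<in>B. c q * q x)"
      using that x unfolding Q_def by simp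
    finally show "(\<Sum>z\<in>V. P x z * (u z - (\<Sum>q\<in>B. c q * q z))) = u x - (\<Sum>q\<in>B. c q * q x)" .
  qed
  have Qsc: "Q (\<lambda>x. a * u x)" if "Q u" for u a
    using that unfolding Q_def by (simp add: sum_distrib_left[symmetric] algebra_simps)
  have Quu: "Q (uu y)" if "y \<in> V" for y
    unfolding Q_def
  proof
    fix x assume x: "x \<in> V"
    have "(\<Sum>z\<in>V. P x z * uu y z) = ip V (uu x) (uu y)"
      unfolding ip_def uu_def by (intro sum.cong) auto
    then show "(\<Sum>z\<in>V. P x z * uu y z) = uu y x" using ip_uu[OF x that] x that
      by (simp add: uu_def P_sym[of x])
  qed
  have "\<exists>B. finite B \<and> (\<forall>q\<in>B. Q q) \<and> (\<forall>q\<in>B. ip V q q = 1) \<and> (\<forall>q\<in>B. \<forall>q'\<in>B. q \<noteq> q' \<longrightarrow> ip V q q' = 0)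
        \<and> (\<forall>w\<in>uu ` V. \<forall>x\<in>V. w x = (\<Sum>q\<in>B. ip V w q * q x))"
  proof (rule gs[where Q=Q and V=V and U="uu ` V"])
    show "finite V" by (rule fin)
    show "finite (uu ` V)" using fin by simp
    show "\<forall>w\<in>uu ` V. Q w" using Quu by auto
    show "Q (\<lambda>x. u x - (\<Sum>q\<in>B. c q * q x))" if "finite B" "Q u" "\<forall>q\<in>B. Q q" for u B c
      using Qsum that by blast
    show "Q (\<lambda>x. a * u x)" if "Q u" for u a using Qsc that by blast
  qed
  then obtain B where fB: "finite B" and QB: "\<forall>q\<in>B. Q q" and n1: "\<forall>q\<in>B. ip V q q = 1"
    and orth: "\<forall>q\<in>B. \<forall>q'\<in>B. q \<noteq> q' \<longrightarrow> ip V q q' = 0"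
    and exp0: "\<forall>w\<in>uu ` V. \<forall>x\<in>V. w x = (\<Sum>q\<in>B. ip V w q * q x)"
    by (elim exE conjE)
  have exp: "\<forall>x\<in>V. \<forall>z\<in>V. uu x z = (\<Sum>q\<in>B. ip V (uu x) q * q z)" using exp0 by blast
  have cardB: "real (card B) = v * alpha"
  proof -
    have "real (card B) = (\<Sum>q\<in>B. ip V q q)" using n1 by simp
    also have "\<dots> = (\<Sum>q\<in>B. \<Sum>x\<in>V. ip V (uu x) q * ip V (uu x) q)"
    proof (intro sum.cong refl)
      fix q assume q: "q \<in> B"
      have "q x = ip V (uu x) q" if "x \<in> V" for x
      proof -
        have "ip V (uu x) q = (\<Sum>z\<in>V. P x z * q z)" unfolding ip_def uu_def by (intro sum.cong) auto
        also have "\<dots> = q x" using QB q that unfolding Q_def by blast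
        finally show ?thesis by simp
      qed
      then show "ip V q q = (\<Sum>x\<in>V. ip V (uu x) q * ip V (uu x) q)" unfolding ip_def[of V q q] by simp
    qed
    also have "\<dots> = (\<Sum>x\<in>V. \<Sum>q\<in>B. ip V (uu x) q * ip V (uu x) q)" by (rule sum.swap)
    also have "\<dots> = (\<Sum>x\<in>V. ip V (uu x) (uu x))"
    proof (intro sum.cong refl)
      fix x assume x: "x \<in> V"
      have "ip V (uu x) (uu x) = ip V (\<lambda>z. \<Sum>q\<in>B. ip V (uu x) q * q z) (uu x)"
        using exp x by (intro ip_cong) auto
      also have "\<dots> = (\<Sum>q\<in>B. ip V (uu x) q * ip V q (uu x))" by (rule ip_sum_left)
      also have "\<dots> = (\<Sum>q\<in>B. ip V (uu x) q * ip V (uu x) q)"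
        by (intro sum.cong refl) (simp add: ip_comm[of V _ "uu x"])
      finally show "(\<Sum>q\<in>B. ip V (uu x) q * ip V (uu x) q) = ip V (uu x) (uu x)" by simp
    qed
    also have "\<dots> = (\<Sum>x\<in>V. alpha)" by (intro sum.cong refl) (simp add: ip_uu P_diag)
    also have "\<dots> = v * alpha" using cardV by simp
    finally show ?thesis .
  qed
  have off: "\<forall>x\<in>V. \<forall>y\<in>V. x \<noteq> y \<longrightarrow> (ip V (uu x) (uu y) - bet) * (ip V (uu x) (uu y) - gam) = 0"
  proof (intro ballI impI)
    fix x y assume xy: "x \<in> V" "y \<in> V" "x \<noteq> y"
    show "(ip V (uu x) (uu y) - bet) * (ip V (uu x) (uu y) - gam) = 0"
      unfolding ip_uu[OF xy(1,2)] using P_adj[OF xy(3)] P_nadj[OF xy(3)] by (cases "E x y") simp_all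
  qed
  have diag: "\<forall>x\<in>V. (ip V (uu x) (uu x) - bet) * (ip V (uu x) (uu x) - gam) \<noteq> 0"
  proof
    fix x assume x: "x \<in> V"
    have "alpha - bet = (- \<sigma> - 1) / th" unfolding alpha_def bet_def by (simp add: diff_divide_distrib)
    moreover have "alpha - gam = - \<sigma> / th" unfolding alpha_def gam_def by (simp add: diff_divide_distrib)
    ultimately have "alpha - bet \<noteq> 0" "alpha - gam \<noteq> 0" using th_nz s0 s1 by auto
    then show "(ip V (uu x) (uu x) - bet) * (ip V (uu x) (uu x) - gam) \<noteq> 0"
      using ip_uu[OF x x] P_diag by simp
  qed
  have "card V \<le> card B * card B + card B + 1"
    by (rule indep_bound[OF fin fB exp off diag])
  then have "real (card V) \<le> real (card B * card B + card B + 1)"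
    by (simp only: of_nat_le_iff)
  then have "real (card V) \<le> real (card B) * real (card B) + real (card B) + 1" by simp
  then show ?thesis unfolding cardB cardV by (simp add: power2_eq_square)
qed

end




context srgl
begin

lemma N_fin: "finite (neighbours V E x)" using fin unfolding neighbours_def by simp

lemma mu_ne_k:
  assumes conn: "connected_graph V (complement_graph V E)"
  shows "mu \<noteq> k"
proof
  assume mk: "mu = k"
  let ?N = "neighbours V E"
  have step: "?N a = ?N b" if "complement_graph V E a b" for a b
  proof -
    have ab: "a \<in> V" "b \<in> V" "a \<noteq> b" "\<not> E a b" using that unfolding complement_graph_def by auto
    have c: "card (?N a \<inter> ?N b) = k" using muu[OF ab] mk by simp
    have "?N a \<inter> ?N b = ?N a"
      by (rule card_subset_eq) (use N_fin c degk[OF ab(1)] in auto)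
    moreover have "?N a \<inter> ?N b = ?N b"
      by (rule card_subset_eq) (use N_fin c degk[OF ab(2)] in auto)
    ultimately show ?thesis by simp
  qed
  have all: "(complement_graph V E)\<^sup>*\<^sup>* a b \<Longrightarrow> ?N a = ?N b" for a b
    by (induction rule: rtranclp_induct) (auto dest: step)
  obtain x y where xy: "E x y" using srg unfolding srg_def by auto
  then have xyV: "x \<in> V" "y \<in> V" using inV by auto
  have "?N x = ?N y" using all conn xyV unfolding connected_graph_def by blast
  moreover have "y \<in> ?N x" using xy xyV unfolding neighbours_def by simp
  ultimately have "E y y" unfolding neighbours_def by simp
  then show False using irr by simp
qed

lemma l_ne:
  assumes conn: "connected_graph V E"
  shows "l + 1 \<noteq> k"
proof
  assume lk: "l + 1 = k"
  let ?N = "neighbours V E"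
  have sub: "insert x (?N x) \<subseteq> insert y (?N y)" if "E x y" for x y
  proof -
    have xy: "x \<in> V" "y \<in> V" using inV that by auto
    have c: "card (?N x \<inter> ?N y) = l" using lam[OF xy that] .
    have yN: "y \<in> ?N x" using that xy unfolding neighbours_def by simp
    have "card (?N x - {y}) = k - 1" using degk[OF xy(1)] yN N_fin by simp
    have sub1: "?N x \<inter> ?N y \<subseteq> ?N x - {y}" using irr unfolding neighbours_def by auto
    have "?N x \<inter> ?N y = ?N x - {y}"
      by (rule card_subset_eq) (use N_fin sub1 c lk \<open>card (?N x - {y}) = k - 1\<close> in auto)
    then have "?N x - {y} \<subseteq> ?N y" by blast
    moreover have "x \<in> ?N y" using sym[OF that] xy unfolding neighbours_def by simp
    ultimately show ?thesis by blast
  qed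
  have step: "insert x (?N x) = insert y (?N y)" if "E x y" for x y
    using sub[OF that] sub[OF sym[OF that]] by blast
  have all: "E\<^sup>*\<^sup>* a b \<Longrightarrow> insert a (?N a) = insert b (?N b)" for a b
    by (induction rule: rtranclp_induct) (auto dest: step)
  obtain a b where ab: "a \<in> V" "b \<in> V" "a \<noteq> b" "\<not> E a b" using srg unfolding srg_def by auto
  have "insert a (?N a) = insert b (?N b)" using all conn ab unfolding connected_graph_def by blast
  then have "b \<in> insert a (?N a)" by auto
  then show False using ab unfolding neighbours_def by auto
qed

lemma v_ge2: "v \<ge> 2"
proof -
  obtain a b where ab: "a \<in> V" "b \<in> V" "a \<noteq> b" using srg unfolding srg_def by auto
  have "card {a, b} \<le> card V" using ab fin by (intro card_mono) auto
  then show ?thesis using ab cardV by simp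
qed

lemma mu_le_k: "mu \<le> k"
proof -
  obtain a b where ab: "a \<in> V" "b \<in> V" "a \<noteq> b" "\<not> E a b" using srg unfolding srg_def by auto
  have "card (neighbours V E a \<inter> neighbours V E b) \<le> card (neighbours V E a)"
    using N_fin by (intro card_mono) auto
  then show ?thesis using muu[OF ab] degk[OF ab(1)] by simp
qed

lemma k_le_v: "k \<le> v"
proof -
  obtain a where a: "a \<in> V" using V_ne by auto
  have "card (neighbours V E a) \<le> card V" using fin by (intro card_mono) (auto simp: neighbours_def)
  then show ?thesis using degk[OF a] cardV by simp
qed

end




lemma final_alg:
  fixes v m \<rho> K :: real
  assumes v2: "v \<ge> 2" and m0: "m \<ge> 0" and vm: "v \<le> m^2 + m + 1" and mK: "m * \<rho>^2 \<le> K" and K: "K \<le> v^2/4"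
  shows "\<bar>\<rho>\<bar> < v powr (3/4)"
proof -
  define t where "t = sqrt v"
  have t2: "t * t = v" unfolding t_def using v2 by simp
  have tpos: "t > 0" unfolding t_def using v2 by simp
  have t14: "t \<ge> 1.4"
  proof (rule ccontr)
    assume "\<not> t \<ge> 1.4"
    then have "t < 1.4" by simp
    then have "t * t < 1.4 * 1.4" using tpos by (intro mult_strict_mono) auto
    then show False using t2 v2 by simp
  qed
  have sq: "\<rho>^2 < v * t"
  proof (rule ccontr)
    assume "\<not> \<rho>^2 < v * t"
    then have r: "\<rho>^2 \<ge> v * t" by simp
    have "m * (v * t) \<le> m * \<rho>^2" using r m0 by (rule mult_left_mono)
    then have "m * (v * t) \<le> v^2 / 4" using mK K by linarith
    then have "m * (t*t*t) * 4 \<le> (t*t)^2" unfolding t2[symmetric] by (simp add: algebra_simps)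
    then have "m * 4 \<le> t" using tpos by (simp add: power2_eq_square algebra_simps)
    then have "m \<le> t/4" by simp
    then have "m^2 + m + 1 \<le> (t/4)^2 + t/4 + 1" using m0 by (intro add_mono power_mono) auto
    also have "\<dots> < t * t"
    proof -
      have "t * t \<ge> 1.4 * t" using t14 tpos by (intro mult_right_mono) auto
      then show ?thesis unfolding power2_eq_square using t14 by linarith
    qed
    finally show False using vm t2 by simp
  qed
  have w: "v powr (3/4) * v powr (3/4) = v * t"
  proof -
    have "v powr (3/4) * v powr (3/4) = v powr (3/2)" by (simp add: powr_add[symmetric])
    also have "\<dots> = v powr (1 + 1/2)" by simp
    also have "\<dots> = v powr 1 * v powr (1/2)" by (rule powr_add)
    also have "\<dots> = v * v powr (1/2)" using v2 by simp
    also have "\<dots> = v * t" unfolding t_def using v2 by (simp add: powr_half_sqrt)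
    finally show ?thesis .
  qed
  have wpos: "v powr (3/4) > 0" using v2 by simp
  show ?thesis
  proof (rule ccontr)
    assume "\<not> \<bar>\<rho>\<bar> < v powr (3/4)"
    then have "\<bar>\<rho>\<bar> \<ge> v powr (3/4)" by simp
    then have "\<bar>\<rho>\<bar> * \<bar>\<rho>\<bar> \<ge> v powr (3/4) * v powr (3/4)" using wpos by (intro mult_mono) auto
    then have "\<rho>^2 \<ge> v * t" using w by (simp add: power2_eq_square)
    then show False using sq by simp
  qed
qed


theorem corollary1p4:
  fixes V :: "'a set" and E :: "'a \<Rightarrow> 'a \<Rightarrow> bool" and v k l m :: nat
  assumes "primitive_srg V E v k l m"
  shows "\<bar>real l - real m\<bar> < real v powr (3/4)"
proof -
  have srg: "srg V E v k l m" and conn: "connected_graph V E"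
    and conn': "connected_graph V (complement_graph V E)"
    using assms unfolding primitive_srg_def by auto
  interpret S: srgl V E v k l m by unfold_locales (rule srg)
  have mk: "m < k" using S.mu_ne_k[OF conn'] S.mu_le_k by simp
  have lk: "l + 1 \<noteq> k" by (rule S.l_ne[OF conn])
  have v2: "real v \<ge> 2" using S.v_ge2 by simp
  have kv: "k \<le> v" by (rule S.k_le_v)
  define d where "d = real l - real m"
  define Dk where "Dk = d^2 + 4 * (real k - real m)"
  have Dpos: "Dk > 0" unfolding Dk_def using mk by (simp add: add_nonneg_pos)
  define r where "r = (d + sqrt Dk) / 2"
  define s where "s = (d - sqrt Dk) / 2"
  have sq: "sqrt Dk * sqrt Dk = Dk" using Dpos by simp
  have sqpos: "sqrt Dk > 0" using Dpos by simp
  have rs_sum: "r + s = real l - real m" unfolding r_def s_def d_def by (simp add: field_simps)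
  have rs_prod: "r * s = real m - real k"
  proof -
    have "r * s = (d*d - sqrt Dk * sqrt Dk) / 4" unfolding r_def s_def by (simp add: field_simps)
    also have "\<dots> = (d*d - Dk) / 4" by (simp only: sq)
    also have "\<dots> = real m - real k" unfolding Dk_def by (simp add: power2_eq_square field_simps)
    finally show ?thesis .
  qed
  have rs_ne: "r \<noteq> s" unfolding r_def s_def using sqpos by simp
  have sr: "s < r" unfolding r_def s_def using sqpos by simp
  have prodneg: "r * s < 0" using rs_prod mk by simp
  have s_neg: "s < 0" and r_pos: "r > 0"
  proof -
    show "s < 0"
    proof (rule ccontr)
      assume "\<not> s < 0" then have "s \<ge> 0" by simp
      then have "r * s \<ge> 0" using sr by simp
      then show False using prodneg by simp
    qed
    then show "r > 0" using prodneg by (simp add: mult_less_0_iff)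
  qed
  have not_m1: "x \<noteq> -1" if "x = r \<or> x = s" for x
  proof
    assume x: "x = -1"
    have e1: "real l - real m = r + s" and e2: "real k - real m = - (r * s)" using rs_sum rs_prod by auto
    have "(x - r) * (x - s) = 0" using that by auto
    then have "x * x - (real l - real m) * x - (real k - real m) = 0"
      unfolding e1 e2 by (simp add: algebra_simps)
    then have "1 + real l - real k = 0" using x by (simp add: algebra_simps)
    then have "l + 1 = k" by linarith
    then show False using lk by simp
  qed
  interpret A: srgc V E v k l m r s by unfold_locales (use rs_sum rs_prod rs_ne in auto)
  interpret B: srgc V E v k l m s r by unfold_locales (use rs_sum rs_prod rs_ne in \<open>auto simp: mult.commute\<close>)
  have coreA: "real v \<le> (v * A.alpha)^2 + v * A.alpha + 1"
    by (rule A.core_bound) (use s_neg not_m1 in auto)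
  have coreB: "real v \<le> (v * B.alpha)^2 + v * B.alpha + 1"
    by (rule B.core_bound) (use r_pos not_m1 in auto)
  have a0: "v * A.alpha \<ge> 0" using A.alpha_nonneg by simp
  have b0: "v * B.alpha \<ge> 0" using B.alpha_nonneg by simp
  have vpos: "real v > 0" using v2 by simp
  have mA: "real v * A.alpha = (- s * (real v - 1) - real k) / (r - s)"
  proof -
    have "real v * A.alpha = (real v * (- s - A.c0)) / (r - s)" unfolding A.alpha_def A.th_def by simp
    also have "real v * (- s - A.c0) = - s * (real v - 1) - real k"
    proof -
      have "real v * A.c0 = real k - s" unfolding A.c0_def using vpos by simp
      then show ?thesis by (simp add: algebra_simps)
    qed
    finally show ?thesis .
  qed
  have mB: "real v * B.alpha = (- r * (real v - 1) - real k) / (s - r)"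
  proof -
    have "real v * B.alpha = (real v * (- r - B.c0)) / (s - r)" unfolding B.alpha_def B.th_def by simp
    also have "real v * (- r - B.c0) = - r * (real v - 1) - real k"
    proof -
      have "real v * B.c0 = real k - r" unfolding B.c0_def using vpos by simp
      then show ?thesis by (simp add: algebra_simps)
    qed
    finally show ?thesis .
  qed
  have ident: "(real v * A.alpha) * r^2 + (real v * B.alpha) * s^2 = real k * (real v - real k)"
  proof -
    have num: "(- s * (real v - 1) - real k) * r^2 - (- r * (real v - 1) - real k) * s^2
        = (r - s) * (- (real v - 1) * (r * s) - real k * (r + s))" by (simp add: algebra_simps power2_eq_square)
    have rsz: "r - s \<noteq> 0" using rs_ne by simp
    have "(real v * A.alpha) * r^2 + (real v * B.alpha) * s^2
        = ((- s * (real v - 1) - real k) * r^2 - (- r * (real v - 1) - real k) * s^2) / (r - s)"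
    proof -
      have g: "(a/(r-s)) * r^2 + (b/(s-r))*s^2 = (a*r^2 - b*s^2)/(r-s)" for a b
      proof -
        have "b/(s-r) = - (b/(r-s))" by (metis minus_diff_eq divide_minus_right)
        then show ?thesis by (simp add: diff_divide_distrib)
      qed
      show ?thesis unfolding mA mB by (rule g)
    qed
    also have "\<dots> = - (real v - 1) * (r * s) - real k * (r + s)" unfolding num using rsz by simp
    also have "\<dots> = real k * (real v - real k)"
      unfolding rs_prod rs_sum using S.kk by (simp add: algebra_simps)
    finally show ?thesis .
  qed
  have K: "real k * (real v - real k) \<le> (real v)^2 / 4"
  proof -
    have "0 \<le> (real v - 2 * real k)^2" by simp
    then show ?thesis by (simp add: power2_eq_square algebra_simps)
  qed
  have sA: "(v * B.alpha) * s^2 \<ge> 0" using b0 by simp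
  have rA: "(v * A.alpha) * r^2 \<ge> 0" using a0 by simp
  have br: "\<bar>r\<bar> < real v powr (3/4)"
    by (rule final_alg[OF v2 a0 coreA _ K]) (use ident sA in linarith)
  have bs: "\<bar>s\<bar> < real v powr (3/4)"
    by (rule final_alg[OF v2 b0 coreB _ K]) (use ident rA in linarith)
  show ?thesis
  proof (cases "real l - real m \<ge> 0")
    case True
    then have "\<bar>real l - real m\<bar> \<le> \<bar>r\<bar>" using rs_sum s_neg r_pos by simp
    then show ?thesis using br by simp
  next
    case False
    then have "\<bar>real l - real m\<bar> \<le> \<bar>s\<bar>" using rs_sum s_neg r_pos by simp
    then show ?thesis using bs by simp
  qed
qed

end
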